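(* Let $\mathcal{H}$ be a complex Hilbert space of finite dimension $n\geq 2$ and let $m\geq 2$. There does not exist a density operator $\rho$ on $\mathcal{H}^{\otimes m}$ that is in single $\sigma$-measurement consensus ($\sigma$SMC) for every self-adjoint operator $\sigma$ on $\mathcal{H}$.
   Context: For $X$ an operator on $\mathcal{H}$, write $X^{(i)}=I^{\otimes(i-1)}\otimes X\otimes I^{\otimes(m-i)}$. Given a self-adjoint $\sigma$ on $\mathcal{H}$ with spectral decomposition $\sigma=\sum_j s_j\Pi_j$ (the $s_j$ pairwise distinct, $\Pi_j$ the orthogonal spectral projectors), a density operator $\rho$ on $\mathcal{H}^{\otimes m}$ (positive semidefinite, trace one) is in $\sigma$SMC if $\mathrm{Tr}(\Pi_j^{(k)}\Pi_j^{(\ell)}\rho)=\mathrm{Tr}(\Pi_j^{(\ell)}\rho)$ for all $k,\ell\in\{1,\dots,m\}$ and all $j$. *)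

theory Defs
  imports Complex_Main
begin

text \<open>Coordinates: H = C^n with standard basis indexed by {..<n}.
  Operators on H are matrices  nat \<Rightarrow> nat \<Rightarrow> complex  (only entries with
  indices < n matter); vectors are  nat \<Rightarrow> complex.
  The tensor power H^{\<otimes>m} has the product basis indexed by lists of
  length m with entries < n; operators on it are matrices indexed by such lists.\<close>

definition tidx :: "nat \<Rightarrow> nat \<Rightarrow> nat list set" where
  "tidx n m = {xs. length xs = m \<and> (\<forall>x\<in>set xs. x < n)}"

definition hmv :: "nat \<Rightarrow> (nat \<Rightarrow> nat \<Rightarrow> complex) \<Rightarrow> (nat \<Rightarrow> complex) \<Rightarrow> nat \<Rightarrow> complex" where
  "hmv n A v = (\<lambda>i. \<Sum>j<n. A i j * v j)"

definition hmul :: "nat \<Rightarrow> (nat \<Rightarrow> nat \<Rightarrow> complex) \<Rightarrow> (nat \<Rightarrow> nat \<Rightarrow> complex) \<Rightarrow> nat \<Rightarrow> nat \<Rightarrow> complex" where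
  "hmul n A B = (\<lambda>i k. \<Sum>j<n. A i j * B j k)"

definition self_adjoint :: "nat \<Rightarrow> (nat \<Rightarrow> nat \<Rightarrow> complex) \<Rightarrow> bool" where
  "self_adjoint n A \<longleftrightarrow> (\<forall>i<n. \<forall>j<n. A j i = cnj (A i j))"

text \<open>P is the orthogonal spectral projector of sigma belonging to the value s:
  P is an orthogonal projection (self-adjoint, idempotent) whose range
  (= set of fixed vectors) is the eigenspace ker(sigma - s I).
  If s is not an eigenvalue this forces P = 0.\<close>
definition spectral_projector ::
  "nat \<Rightarrow> (nat \<Rightarrow> nat \<Rightarrow> complex) \<Rightarrow> complex \<Rightarrow> (nat \<Rightarrow> nat \<Rightarrow> complex) \<Rightarrow> bool" where
  "spectral_projector n \<sigma> s P \<longleftrightarrow>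
     self_adjoint n P \<and>
     (\<forall>i<n. \<forall>k<n. hmul n P P i k = P i k) \<and>
     (\<forall>v. (\<forall>i<n. hmv n P v i = v i) \<longleftrightarrow> (\<forall>i<n. hmv n \<sigma> v i = s * v i))"

text \<open>X^{(i)} = I\<otimes>...\<otimes>X\<otimes>...\<otimes>I with X in tensor slot i (1-based, 1 \<le> i \<le> m).\<close>
definition lift :: "nat \<Rightarrow> nat \<Rightarrow> nat \<Rightarrow> (nat \<Rightarrow> nat \<Rightarrow> complex) \<Rightarrow> nat list \<Rightarrow> nat list \<Rightarrow> complex" where
  "lift n m i X = (\<lambda>a b. X (a ! (i - 1)) (b ! (i - 1)) *
      (\<Prod>j\<in>{..<m} - {i - 1}. if a ! j = b ! j then 1 else 0))"

definition tmul :: "nat \<Rightarrow> nat \<Rightarrow> (nat list \<Rightarrow> nat list \<Rightarrow> complex) \<Rightarrow> (nat list \<Rightarrow> nat list \<Rightarrow> complex)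
     \<Rightarrow> nat list \<Rightarrow> nat list \<Rightarrow> complex" where
  "tmul n m A B = (\<lambda>a c. \<Sum>b\<in>tidx n m. A a b * B b c)"

definition ttrace :: "nat \<Rightarrow> nat \<Rightarrow> (nat list \<Rightarrow> nat list \<Rightarrow> complex) \<Rightarrow> complex" where
  "ttrace n m A = (\<Sum>a\<in>tidx n m. A a a)"

definition density_operator :: "nat \<Rightarrow> nat \<Rightarrow> (nat list \<Rightarrow> nat list \<Rightarrow> complex) \<Rightarrow> bool" where
  "density_operator n m \<rho> \<longleftrightarrow>
     (\<forall>a\<in>tidx n m. \<forall>b\<in>tidx n m. \<rho> b a = cnj (\<rho> a b)) \<and>
     (\<forall>v::nat list \<Rightarrow> complex.
        (\<Sum>a\<in>tidx n m. \<Sum>b\<in>tidx n m. cnj (v a) * \<rho> a b * v b) \<in> \<real> \<and>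
        0 \<le> Re (\<Sum>a\<in>tidx n m. \<Sum>b\<in>tidx n m. cnj (v a) * \<rho> a b * v b)) \<and>
     ttrace n m \<rho> = 1"

definition sigma_SMC :: "nat \<Rightarrow> nat \<Rightarrow> (nat \<Rightarrow> nat \<Rightarrow> complex) \<Rightarrow> (nat list \<Rightarrow> nat list \<Rightarrow> complex) \<Rightarrow> bool" where
  "sigma_SMC n m \<sigma> \<rho> \<longleftrightarrow>
     (\<forall>s P. spectral_projector n \<sigma> s P \<longrightarrow>
        (\<forall>k\<in>{1..m}. \<forall>l\<in>{1..m}.
           ttrace n m (tmul n m (tmul n m (lift n m k P) (lift n m l P)) \<rho>)
           = ttrace n m (tmul n m (lift n m l P) \<rho>)))"

end

theory Submission imports Defs begin

lemma prod_ind: "finite S \<Longrightarrow> (\<Prod>j\<in>S. if P j then (1::complex) else 0) = (if \<forall>j\<in>S. P j then 1 else 0)"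
  by (induction S rule: finite_induct) auto

lemma finite_tidx: "finite (tidx n k)"
proof -
  have "tidx n k \<subseteq> {xs. set xs \<subseteq> {..<n} \<and> length xs = k}" unfolding tidx_def by auto
  moreover have "finite {xs. set xs \<subseteq> {..<n} \<and> length xs = k}"
    by (rule finite_lists_length_eq) simp
  ultimately show ?thesis by (rule finite_subset)
qed

lemma tidx_Suc: "tidx n (Suc k) = (\<lambda>(x,r). x # r) ` ({..<n} \<times> tidx n k)"
proof (rule set_eqI)
  fix a
  show "a \<in> tidx n (Suc k) \<longleftrightarrow> a \<in> (\<lambda>(x,r). x # r) ` ({..<n} \<times> tidx n k)"
    by (cases a) (auto simp: tidx_def)
qed

lemma sum_tidx_Suc: "(\<Sum>a\<in>tidx n (Suc k). f a) = (\<Sum>x<n. \<Sum>r\<in>tidx n k. f (x # r))"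
proof -
  have inj: "inj_on (\<lambda>(x,r). x # r) ({..<n} \<times> tidx n k)" by (auto simp: inj_on_def)
  have "(\<Sum>a\<in>tidx n (Suc k). f a) = (\<Sum>p\<in>{..<n} \<times> tidx n k. f ((\<lambda>(x,r). x # r) p))"
    unfolding tidx_Suc by (rule sum.reindex[OF inj, unfolded comp_def])
  also have "\<dots> = (\<Sum>x<n. \<Sum>r\<in>tidx n k. f (x # r))"
    by (simp add: sum.cartesian_product finite_tidx split_def)
  finally show ?thesis .
qed

lemma sum_tidx_SS: "(\<Sum>a\<in>tidx n (Suc (Suc k)). f a) = (\<Sum>x<n. \<Sum>y<n. \<Sum>r\<in>tidx n k. f (x # y # r))"
  by (simp add: sum_tidx_Suc)

lemma eq1: assumes "length r = k" "length r' = k"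
  shows "(\<forall>j\<in>{..<Suc (Suc k)}-{0}. (x#y#r)!j = (x'#y'#r')!j) \<longleftrightarrow> (y = y' \<and> r = r')"
proof
  assume h: "\<forall>j\<in>{..<Suc (Suc k)}-{0}. (x#y#r)!j = (x'#y'#r')!j"
  have "y = y'" using h[rule_format, of 1] by simp
  moreover have "r = r'"
  proof (rule nth_equalityI)
    show "length r = length r'" using assms by simp
    fix i assume "i < length r"
    then show "r ! i = r' ! i" using h[rule_format, of "Suc (Suc i)"] assms by simp
  qed
  ultimately show "y = y' \<and> r = r'" by simp
next
  assume "y = y' \<and> r = r'"
  then show "\<forall>j\<in>{..<Suc (Suc k)}-{0}. (x#y#r)!j = (x'#y'#r')!j"
    by (auto simp: nth_Cons split: nat.splits)
qed

lemma eq2: assumes "length r = k" "length r' = k"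
  shows "(\<forall>j\<in>{..<Suc (Suc k)}-{1}. (x#y#r)!j = (x'#y'#r')!j) \<longleftrightarrow> (x = x' \<and> r = r')"
proof
  assume h: "\<forall>j\<in>{..<Suc (Suc k)}-{1}. (x#y#r)!j = (x'#y'#r')!j"
  have "x = x'" using h[rule_format, of 0] by simp
  moreover have "r = r'"
  proof (rule nth_equalityI)
    show "length r = length r'" using assms by simp
    fix i assume "i < length r"
    then show "r ! i = r' ! i" using h[rule_format, of "Suc (Suc i)"] assms by simp
  qed
  ultimately show "x = x' \<and> r = r'" by simp
next
  assume "x = x' \<and> r = r'"
  then show "\<forall>j\<in>{..<Suc (Suc k)}-{1}. (x#y#r)!j = (x'#y'#r')!j"
    by (auto simp: nth_Cons split: nat.splits)
qed

lemma lift1: assumes "length r = k" "length r' = k"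
  shows "lift n (Suc (Suc k)) 1 A (x#y#r) (x'#y'#r') = (if y = y' \<and> r = r' then A x x' else 0)"
  unfolding lift_def using eq1[OF assms, of x y x' y'] by (simp add: prod_ind)

lemma lift1': assumes "length r = k" "length r' = k"
  shows "lift n (Suc (Suc k)) (Suc 0) A (x#y#r) (x'#y'#r') = (if y = y' \<and> r = r' then A x x' else 0)"
  using lift1[OF assms] by simp

lemma lift2: assumes "length r = k" "length r' = k"
  shows "lift n (Suc (Suc k)) 2 A (x#y#r) (x'#y'#r') = (if x = x' \<and> r = r' then A y y' else 0)"
  unfolding lift_def using eq2[OF assms, of x y x' y'] by (simp add: prod_ind)


lemma sum_single: "finite S \<Longrightarrow> a \<in> S \<Longrightarrow> (\<And>x. x \<in> S \<Longrightarrow> x \<noteq> a \<Longrightarrow> f x = 0) \<Longrightarrow> sum f S = f a"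
  by (simp add: sum.remove sum.neutral)

definition Fm :: "nat \<Rightarrow> nat \<Rightarrow> (nat list \<Rightarrow> nat list \<Rightarrow> complex) \<Rightarrow> (nat \<Rightarrow> nat \<Rightarrow> complex) \<Rightarrow> (nat \<Rightarrow> nat \<Rightarrow> complex) \<Rightarrow> complex" where
  "Fm n k \<rho> A B = (\<Sum>r\<in>tidx n k. \<Sum>x<n. \<Sum>y<n. \<Sum>x'<n. \<Sum>y'<n. A x x' * B y y' * \<rho> (x'#y'#r) (x#y#r))"

lemma inner12:
  assumes "r \<in> tidx n k" "r' \<in> tidx n k" "x < n" "y < n" "x' < n" "y' < n"
  shows "(\<Sum>c\<in>tidx n (Suc (Suc k)). lift n (Suc (Suc k)) 1 A (x#y#r) c * lift n (Suc (Suc k)) 2 B c (x'#y'#r'))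
     = (if r = r' then A x x' * B y y' else 0)"
proof -
  have "(\<Sum>c\<in>tidx n (Suc (Suc k)). lift n (Suc (Suc k)) 1 A (x#y#r) c * lift n (Suc (Suc k)) 2 B c (x'#y'#r'))
     = (\<Sum>x''<n. \<Sum>y''<n. \<Sum>r''\<in>tidx n k. (if y = y'' \<and> r = r'' then A x x'' else 0) * (if x'' = x' \<and> r'' = r' then B y'' y' else 0))"
    unfolding sum_tidx_SS
    apply (intro sum.cong refl)
    using assms by (simp add: lift1' lift2 tidx_def)
  also have "\<dots> = (\<Sum>y''<n. \<Sum>r''\<in>tidx n k. (if y = y'' \<and> r = r'' then A x x' else 0) * (if x' = x' \<and> r'' = r' then B y'' y' else 0))"
    by (rule sum_single) (use assms in auto)
  also have "\<dots> = (\<Sum>r''\<in>tidx n k. (if y = y \<and> r = r'' then A x x' else 0) * (if x' = x' \<and> r'' = r' then B y y' else 0))"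
    by (rule sum_single) (use assms in \<open>auto simp: finite_tidx\<close>)
  also have "\<dots> = (if y = y \<and> r = r' then A x x' else 0) * (if x' = x' \<and> r' = r' then B y y' else 0)"
    by (rule sum_single) (use assms in \<open>auto simp: finite_tidx\<close>)
  also have "\<dots> = (if r = r' then A x x' * B y y' else 0)" by simp
  finally show ?thesis .
qed


lemma ifmult: "(if P then (a::complex) else 0) * b = (if P then a * b else 0)" by simp

lemma tr_tmul: "ttrace n m (tmul n m X \<rho>) = (\<Sum>a\<in>tidx n m. \<Sum>b\<in>tidx n m. X a b * \<rho> b a)"
  by (simp add: ttrace_def tmul_def)

lemma trace_form:
  assumes M: "\<And>x y r x' y' r'. x < n \<Longrightarrow> y < n \<Longrightarrow> x' < n \<Longrightarrow> y' < n \<Longrightarrow> r \<in> tidx n k \<Longrightarrow> r' \<in> tidx n k \<Longrightarrow>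
      M (x#y#r) (x'#y'#r') = (if r = r' then A x x' * B y y' else 0)"
  shows "(\<Sum>a\<in>tidx n (Suc (Suc k)). \<Sum>b\<in>tidx n (Suc (Suc k)). M a b * \<rho> b a) = Fm n k \<rho> A B"
proof -
  have "(\<Sum>a\<in>tidx n (Suc (Suc k)). \<Sum>b\<in>tidx n (Suc (Suc k)). M a b * \<rho> b a)
     = (\<Sum>x<n. \<Sum>y<n. \<Sum>r\<in>tidx n k. \<Sum>x'<n. \<Sum>y'<n. \<Sum>r'\<in>tidx n k. (if r = r' then A x x' * B y y' else 0) * \<rho> (x'#y'#r') (x#y#r))"
    unfolding sum_tidx_SS by (intro sum.cong refl) (simp add: M)
  also have "\<dots> = (\<Sum>x<n. \<Sum>y<n. \<Sum>r\<in>tidx n k. \<Sum>x'<n. \<Sum>y'<n. A x x' * B y y' * \<rho> (x'#y'#r) (x#y#r))"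
    by (intro sum.cong refl) (simp add: ifmult sum.delta finite_tidx)
  also have "\<dots> = (\<Sum>x<n. \<Sum>r\<in>tidx n k. \<Sum>y<n. \<Sum>x'<n. \<Sum>y'<n. A x x' * B y y' * \<rho> (x'#y'#r) (x#y#r))"
    by (intro sum.cong refl) (rule sum.swap)
  also have "\<dots> = Fm n k \<rho> A B"
    unfolding Fm_def by (rule sum.swap)
  finally show ?thesis .
qed

lemma T1: "ttrace n (Suc (Suc k)) (tmul n (Suc (Suc k)) (tmul n (Suc (Suc k)) (lift n (Suc (Suc k)) 1 A) (lift n (Suc (Suc k)) 2 B)) \<rho>) = Fm n k \<rho> A B"
  unfolding tr_tmul
  by (rule trace_form) (simp add: inner12[simplified] tmul_def)

definition dl :: "nat \<Rightarrow> nat \<Rightarrow> complex" where "dl x y = (if x = y then 1 else 0)"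

lemma T2: "ttrace n (Suc (Suc k)) (tmul n (Suc (Suc k)) (lift n (Suc (Suc k)) 2 B) \<rho>) = Fm n k \<rho> dl B"
  unfolding tr_tmul
  by (rule trace_form) (auto simp: lift2 dl_def tidx_def)


lemma Fm_cong: "(\<And>x y. x < n \<Longrightarrow> y < n \<Longrightarrow> A x y = A' x y) \<Longrightarrow> (\<And>x y. x < n \<Longrightarrow> y < n \<Longrightarrow> B x y = B' x y)
   \<Longrightarrow> Fm n k \<rho> A B = Fm n k \<rho> A' B'"
  unfolding Fm_def by (intro sum.cong refl) simp

lemma Fm_diff_left: "Fm n k \<rho> (\<lambda>x y. A x y - A' x y) B = Fm n k \<rho> A B - Fm n k \<rho> A' B"
  unfolding Fm_def by (simp add: sum_subtractf[symmetric] left_diff_distrib)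

lemma Fm_diff_right: "Fm n k \<rho> A (\<lambda>x y. B x y - B' x y) = Fm n k \<rho> A B - Fm n k \<rho> A B'"
  unfolding Fm_def by (simp add: sum_subtractf[symmetric] right_diff_distrib left_diff_distrib)

lemma Fm_scale_left: "Fm n k \<rho> (\<lambda>x y. c * A x y) B = c * Fm n k \<rho> A B"
  unfolding Fm_def by (simp add: sum_distrib_left mult.assoc)

lemma Fm_scale_right: "Fm n k \<rho> A (\<lambda>x y. c * B x y) = c * Fm n k \<rho> A B"
  unfolding Fm_def by (simp add: sum_distrib_left ac_simps)

lemma Fm_sum_right: "Fm n k \<rho> A (\<lambda>x y. \<Sum>j\<in>K. h j x y) = (\<Sum>j\<in>K. Fm n k \<rho> A (h j))"
  unfolding Fm_def sum_distrib_left sum_distrib_right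
  apply (rule sym)
  apply (subst sum.swap, rule sum.cong[OF refl])
  apply (subst sum.swap, rule sum.cong[OF refl])
  apply (subst sum.swap, rule sum.cong[OF refl])
  apply (subst sum.swap, rule sum.cong[OF refl])
  apply (subst sum.swap, rule sum.cong[OF refl])
  by (simp add: ac_simps)

lemma Fm_sum_left: "Fm n k \<rho> (\<lambda>x y. \<Sum>j\<in>K. h j x y) B = (\<Sum>j\<in>K. Fm n k \<rho> (h j) B)"
  unfolding Fm_def sum_distrib_left sum_distrib_right
  apply (rule sym)
  apply (subst sum.swap, rule sum.cong[OF refl])
  apply (subst sum.swap, rule sum.cong[OF refl])
  apply (subst sum.swap, rule sum.cong[OF refl])
  apply (subst sum.swap, rule sum.cong[OF refl])
  apply (subst sum.swap, rule sum.cong[OF refl])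
  by (simp add: ac_simps)

definition qr :: "nat \<Rightarrow> (nat list \<Rightarrow> nat list \<Rightarrow> complex) \<Rightarrow> nat list \<Rightarrow> (nat \<Rightarrow> nat \<Rightarrow> complex) \<Rightarrow> complex" where
  "qr n \<rho> r f = (\<Sum>x<n. \<Sum>y<n. \<Sum>x'<n. \<Sum>y'<n. cnj (f x' y') * \<rho> (x'#y'#r) (x#y#r) * f x y)"

definition outer :: "(nat \<Rightarrow> complex) \<Rightarrow> nat \<Rightarrow> nat \<Rightarrow> complex" where
  "outer u x y = u x * cnj (u y)"

lemma Fm_outer: "Fm n k \<rho> (outer u) (outer v) = (\<Sum>r\<in>tidx n k. qr n \<rho> r (\<lambda>x y. u x * v y))"
  unfolding Fm_def qr_def outer_def by (intro sum.cong refl) (simp add: ac_simps)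

lemma swap4: "(\<Sum>a\<in>A. \<Sum>b\<in>B. \<Sum>c\<in>C. \<Sum>d\<in>D. g a b c d) = (\<Sum>c\<in>C. \<Sum>d\<in>D. \<Sum>a\<in>A. \<Sum>b\<in>B. g a b c d)"
proof -
  have "(\<Sum>a\<in>A. \<Sum>b\<in>B. \<Sum>c\<in>C. \<Sum>d\<in>D. g a b c d) = (\<Sum>a\<in>A. \<Sum>c\<in>C. \<Sum>b\<in>B. \<Sum>d\<in>D. g a b c d)"
    by (intro sum.cong refl) (rule sum.swap)
  also have "\<dots> = (\<Sum>c\<in>C. \<Sum>a\<in>A. \<Sum>b\<in>B. \<Sum>d\<in>D. g a b c d)" by (rule sum.swap)
  also have "\<dots> = (\<Sum>c\<in>C. \<Sum>a\<in>A. \<Sum>d\<in>D. \<Sum>b\<in>B. g a b c d)"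
    by (intro sum.cong refl) (rule sum.swap)
  also have "\<dots> = (\<Sum>c\<in>C. \<Sum>d\<in>D. \<Sum>a\<in>A. \<Sum>b\<in>B. g a b c d)"
    by (intro sum.cong refl) (rule sum.swap)
  finally show ?thesis .
qed

lemma qr_nonneg:
  assumes "density_operator n (Suc (Suc k)) \<rho>" "r \<in> tidx n k"
  shows "Re (qr n \<rho> r f) \<ge> 0"
proof -
  define v where "v a = (if drop 2 a = r then f (a!0) (a!1) else 0)" for a
  have "0 \<le> Re (\<Sum>a\<in>tidx n (Suc (Suc k)). \<Sum>b\<in>tidx n (Suc (Suc k)). cnj (v a) * \<rho> a b * v b)"
    using assms(1) unfolding density_operator_def by blast
  also have "(\<Sum>a\<in>tidx n (Suc (Suc k)). \<Sum>b\<in>tidx n (Suc (Suc k)). cnj (v a) * \<rho> a b * v b)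
     = (\<Sum>x'<n. \<Sum>y'<n. \<Sum>x<n. \<Sum>y<n. cnj (f x' y') * \<rho> (x'#y'#r) (x#y#r) * f x y)"
    unfolding sum_tidx_SS
  proof (intro sum.cong refl)
    fix x' y' assume "x' \<in> {..<n}" "y' \<in> {..<n}"
    have "(\<Sum>r'\<in>tidx n k. \<Sum>x<n. \<Sum>y<n. \<Sum>r''\<in>tidx n k. cnj (v (x' # y' # r')) * \<rho> (x' # y' # r') (x # y # r'') * v (x # y # r''))
      = (\<Sum>r'\<in>tidx n k. if r' = r then (\<Sum>x<n. \<Sum>y<n. \<Sum>r''\<in>tidx n k. if r'' = r then cnj (f x' y') * \<rho> (x' # y' # r) (x # y # r) * f x y else 0) else 0)"
      by (intro sum.cong refl) (auto simp: v_def intro!: sum.neutral sum.cong)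
    also have "\<dots> = (\<Sum>x<n. \<Sum>y<n. \<Sum>r''\<in>tidx n k. if r'' = r then cnj (f x' y') * \<rho> (x' # y' # r) (x # y # r) * f x y else 0)"
      using assms(2) by (simp add: sum.delta finite_tidx)
    also have "\<dots> = (\<Sum>x<n. \<Sum>y<n. cnj (f x' y') * \<rho> (x' # y' # r) (x # y # r) * f x y)"
      using assms(2) by (simp add: sum.delta' finite_tidx)
    finally show "(\<Sum>r'\<in>tidx n k. \<Sum>x<n. \<Sum>y<n. \<Sum>r''\<in>tidx n k. cnj (v (x' # y' # r')) * \<rho> (x' # y' # r') (x # y # r'') * v (x # y # r''))
      = (\<Sum>x<n. \<Sum>y<n. cnj (f x' y') * \<rho> (x' # y' # r) (x # y # r) * f x y)" .
  qed
  also have "\<dots> = qr n \<rho> r f" unfolding qr_def by (rule swap4)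
  finally show ?thesis .
qed


lemma dl_sum_left: "i < n \<Longrightarrow> (\<Sum>l<n. dl i l * X l) = X i"
  by (simp add: dl_def ifmult sum.delta)
lemma dl_sum_right: "j < n \<Longrightarrow> (\<Sum>l<n. X l * dl l j) = X j"
  by (simp add: dl_def mult.commute[of "X _"] ifmult sum.delta')

lemma proj_zero:
  assumes H: "\<forall>\<sigma>. self_adjoint n \<sigma> \<longrightarrow> sigma_SMC n (Suc (Suc k)) \<sigma> \<rho>"
    and sa: "self_adjoint n P" and idem: "\<forall>i<n. \<forall>j<n. hmul n P P i j = P i j"
  shows "Fm n k \<rho> P (\<lambda>x y. dl x y - P x y) = 0 \<and> Fm n k \<rho> (\<lambda>x y. dl x y - P x y) P = 0"
proof -
  define Q where "Q = (\<lambda>x y. dl x y - P x y)"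
  have sp1: "spectral_projector n P 1 P" using sa idem unfolding spectral_projector_def by simp
  have hvQ: "hmv n Q v i = v i - hmv n P v i" if "i < n" for v i
    using that by (simp add: hmv_def Q_def left_diff_distrib sum_subtractf dl_sum_left)
  have hQ: "hmul n Q Q i j = Q i j" if "i < n" "j < n" for i j
  proof -
    have "hmul n Q Q i j = (\<Sum>l<n. dl i l * dl l j) - (\<Sum>l<n. dl i l * P l j) - (\<Sum>l<n. P i l * dl l j) + hmul n P P i j"
    proof -
      have "hmul n Q Q i j = (\<Sum>l<n. dl i l * dl l j - dl i l * P l j - P i l * dl l j + P i l * P l j)"
        unfolding hmul_def Q_def by (rule sum.cong) (simp_all add: algebra_simps)
      also have "\<dots> = (\<Sum>l<n. dl i l * dl l j) - (\<Sum>l<n. dl i l * P l j) - (\<Sum>l<n. P i l * dl l j) + hmul n P P i j"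
        by (simp only: sum.distrib sum_subtractf hmul_def)
      finally show ?thesis .
    qed
    also have "\<dots> = dl i j - P i j - P i j + P i j"
      using that idem by (simp add: dl_sum_left dl_sum_right)
    finally show ?thesis by (simp add: Q_def)
  qed
  have saQ: "self_adjoint n Q" unfolding self_adjoint_def
  proof (intro allI impI)
    fix i j assume "i < n" "j < n"
    then have "P j i = cnj (P i j)" using sa unfolding self_adjoint_def by blast
    then show "Q j i = cnj (Q i j)" by (simp add: Q_def dl_def)
  qed
  have sp0: "spectral_projector n P 0 Q"
    unfolding spectral_projector_def
  proof (intro conjI allI impI)
    show "self_adjoint n Q" by (rule saQ)
  next
    fix i j assume "i < n" "j < n" then show "hmul n Q Q i j = Q i j" by (rule hQ)
  next
    fix v
    have "(\<forall>i<n. hmv n Q v i = v i) \<longleftrightarrow> (\<forall>i<n. v i - hmv n P v i = v i)"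
      using hvQ by simp
    also have "\<dots> \<longleftrightarrow> (\<forall>i<n. hmv n P v i = 0 * v i)" by simp
    finally show "(\<forall>i<n. hmv n Q v i = v i) \<longleftrightarrow> (\<forall>i<n. hmv n P v i = 0 * v i)" .
  qed
  have smc: "sigma_SMC n (Suc (Suc k)) P \<rho>" using H sa by blast
  have mem: "(1::nat) \<in> {1..Suc (Suc k)}" "(2::nat) \<in> {1..Suc (Suc k)}" by auto
  have e1: "Fm n k \<rho> P P = Fm n k \<rho> dl P"
    using smc[unfolded sigma_SMC_def, rule_format, OF sp1, OF mem] unfolding T1 T2 .
  have e2: "Fm n k \<rho> Q Q = Fm n k \<rho> dl Q"
    using smc[unfolded sigma_SMC_def, rule_format, OF sp0, OF mem] unfolding T1 T2 .
  have "Fm n k \<rho> Q P = 0" unfolding Q_def Fm_diff_left using e1 by simp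
  moreover have "Fm n k \<rho> P Q = 0"
  proof -
    have "Fm n k \<rho> Q Q = Fm n k \<rho> dl Q - Fm n k \<rho> P Q" unfolding Q_def Fm_diff_left ..
    then show ?thesis using e2 by simp
  qed
  ultimately show ?thesis unfolding Q_def by simp
qed


lemma sum_nonneg_zero_each:
  fixes f :: "'a \<Rightarrow> real"
  assumes "finite K" "\<And>j. j \<in> K \<Longrightarrow> f j \<ge> 0" "sum f K = 0" "jz \<in> K"
  shows "f jz = 0"
  using assms sum_nonneg_eq_0_iff by blast

lemma Re_Fm_outer: "density_operator n (Suc (Suc k)) \<rho> \<Longrightarrow> Re (Fm n k \<rho> (outer u) (outer v)) = (\<Sum>r\<in>tidx n k. Re (qr n \<rho> r (\<lambda>x y. u x * v y)))"
  by (simp add: Fm_outer Re_sum)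

lemma Re_Fm_outer_nonneg: "density_operator n (Suc (Suc k)) \<rho> \<Longrightarrow> Re (Fm n k \<rho> (outer u) (outer v)) \<ge> 0"
  unfolding Re_Fm_outer by (rule sum_nonneg) (rule qr_nonneg)

lemma Fm_outer_zero_each:
  assumes "density_operator n (Suc (Suc k)) \<rho>" "Re (Fm n k \<rho> (outer u) (outer v)) = 0" "r \<in> tidx n k"
  shows "Re (qr n \<rho> r (\<lambda>x y. u x * v y)) = 0"
  using assms Re_Fm_outer[OF assms(1), of u v]
  by (intro sum_nonneg_zero_each[where K = "tidx n k" and f = "\<lambda>r. Re (qr n \<rho> r (\<lambda>x y. u x * v y))"])
     (auto simp: finite_tidx qr_nonneg)

lemma key:
  assumes dens: "density_operator n (Suc (Suc k)) \<rho>"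
    and H: "\<forall>\<sigma>. self_adjoint n \<sigma> \<longrightarrow> sigma_SMC n (Suc (Suc k)) \<sigma> \<rho>"
    and Npos: "N > 0" and norm: "(\<Sum>l<n. cnj (u l) * u l) = of_real N"
    and dec: "\<And>x y. x < n \<Longrightarrow> y < n \<Longrightarrow> dl x y - outer u x y / of_real N = (\<Sum>j\<in>K. of_real (w j) * outer (g j) x y)"
    and fin: "finite K" and wpos: "\<And>j. j \<in> K \<Longrightarrow> w j \<ge> 0"
    and jz: "jz \<in> K" "w jz > 0" and r: "r \<in> tidx n k"
  shows "Re (qr n \<rho> r (\<lambda>x y. u x * g jz y)) = 0 \<and> Re (qr n \<rho> r (\<lambda>x y. g jz x * u y)) = 0"
proof -
  define P where "P = (\<lambda>x y. outer u x y / of_real N)"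
  have Nne: "(of_real N :: complex) \<noteq> 0" using Npos by simp
  have sa: "self_adjoint n P" unfolding self_adjoint_def P_def outer_def by (simp add: mult.commute)
  have idem: "\<forall>i<n. \<forall>j<n. hmul n P P i j = P i j"
  proof (intro allI impI)
    fix i j assume "i < n" "j < n"
    have "hmul n P P i j = (u i * cnj (u j) / (of_real N * of_real N)) * (\<Sum>l<n. cnj (u l) * u l)"
      unfolding hmul_def P_def outer_def sum_distrib_left
      by (rule sum.cong) (simp_all add: field_simps)
    also have "\<dots> = P i j" unfolding norm P_def outer_def using Nne by (simp add: field_simps)
    finally show "hmul n P P i j = P i j" .
  qed
  from proj_zero[OF H sa idem] have z1: "Fm n k \<rho> P (\<lambda>x y. dl x y - P x y) = 0"
    and z2: "Fm n k \<rho> (\<lambda>x y. dl x y - P x y) P = 0" by auto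
  have PP: "P = (\<lambda>x y. of_real (1/N) * outer u x y)" unfolding P_def by (simp add: field_simps)
  have QQ: "Fm n k \<rho> A (\<lambda>x y. dl x y - P x y) = Fm n k \<rho> A (\<lambda>x y. \<Sum>j\<in>K. of_real (w j) * outer (g j) x y)"
    "Fm n k \<rho> (\<lambda>x y. dl x y - P x y) A = Fm n k \<rho> (\<lambda>x y. \<Sum>j\<in>K. of_real (w j) * outer (g j) x y) A" for A
    by (rule Fm_cong; simp add: P_def dec)+
  have s1: "(\<Sum>j\<in>K. w j * ((1/N) * Re (Fm n k \<rho> (outer u) (outer (g j))))) = 0"
  proof -
    have "0 = Re (Fm n k \<rho> P (\<lambda>x y. dl x y - P x y))" using z1 by simp
    also have "\<dots> = (\<Sum>j\<in>K. w j * ((1/N) * Re (Fm n k \<rho> (outer u) (outer (g j)))))"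
      unfolding QQ Fm_sum_right Fm_scale_right unfolding PP Fm_scale_left by (simp add: Re_sum)
    finally show ?thesis by simp
  qed
  have s2: "(\<Sum>j\<in>K. w j * ((1/N) * Re (Fm n k \<rho> (outer (g j)) (outer u)))) = 0"
  proof -
    have "0 = Re (Fm n k \<rho> (\<lambda>x y. dl x y - P x y) P)" using z2 by simp
    also have "\<dots> = (\<Sum>j\<in>K. w j * ((1/N) * Re (Fm n k \<rho> (outer (g j)) (outer u))))"
      unfolding QQ Fm_sum_left Fm_scale_left unfolding PP Fm_scale_right by (simp add: Re_sum)
    finally show ?thesis by simp
  qed
  have t1: "w jz * ((1/N) * Re (Fm n k \<rho> (outer u) (outer (g jz)))) = 0"
    by (rule sum_nonneg_zero_each[OF fin _ s1 jz(1)])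
       (use wpos Npos Re_Fm_outer_nonneg[OF dens] in auto)
  have t2: "w jz * ((1/N) * Re (Fm n k \<rho> (outer (g jz)) (outer u))) = 0"
    by (rule sum_nonneg_zero_each[OF fin _ s2 jz(1)])
       (use wpos Npos Re_Fm_outer_nonneg[OF dens] in auto)
  have "Re (Fm n k \<rho> (outer u) (outer (g jz))) = 0" using t1 jz(2) Npos by simp
  moreover have "Re (Fm n k \<rho> (outer (g jz)) (outer u)) = 0" using t2 jz(2) Npos by simp
  ultimately show ?thesis using Fm_outer_zero_each[OF dens _ r] by blast
qed


definition ev :: "nat \<Rightarrow> nat \<Rightarrow> complex" where "ev i x = (if x = i then 1 else 0)"

lemma qr_ev: "i < n \<Longrightarrow> j < n \<Longrightarrow> qr n \<rho> r (\<lambda>x y. ev i x * ev j y) = \<rho> (i#j#r) (i#j#r)"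
proof -
  assume a: "i < n" "j < n"
  have "qr n \<rho> r (\<lambda>x y. ev i x * ev j y) = (\<Sum>x<n. \<Sum>y<n. \<Sum>x'<n. \<Sum>y'<n.
     if y' = j then (if x' = i then (if y = j then (if x = i then \<rho> (i#j#r) (i#j#r) else 0) else 0) else 0) else 0)"
    unfolding qr_def ev_def by (intro sum.cong refl) auto
  also have "\<dots> = \<rho> (i#j#r) (i#j#r)" using a by (simp add: sum.delta')
  finally show ?thesis .
qed

lemma qr_par: "qr n \<rho> r (\<lambda>x y. f x y + g x y) + qr n \<rho> r (\<lambda>x y. f x y - g x y) = 2 * qr n \<rho> r f + 2 * qr n \<rho> r g"
proof -
  have "qr n \<rho> r (\<lambda>x y. f x y + g x y) + qr n \<rho> r (\<lambda>x y. f x y - g x y)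
    = (\<Sum>x<n. \<Sum>y<n. \<Sum>x'<n. \<Sum>y'<n. cnj (f x' y' + g x' y') * \<rho> (x'#y'#r) (x#y#r) * (f x y + g x y)
          + cnj (f x' y' - g x' y') * \<rho> (x'#y'#r) (x#y#r) * (f x y - g x y))"
    unfolding qr_def sum.distrib ..
  also have "\<dots> = (\<Sum>x<n. \<Sum>y<n. \<Sum>x'<n. \<Sum>y'<n. 2 * (cnj (f x' y') * \<rho> (x'#y'#r) (x#y#r) * f x y)
          + 2 * (cnj (g x' y') * \<rho> (x'#y'#r) (x#y#r) * g x y))"
    by (intro sum.cong refl) (simp add: algebra_simps)
  also have "\<dots> = 2 * qr n \<rho> r f + 2 * qr n \<rho> r g"
    unfolding qr_def sum.distrib sum_distrib_left ..
  finally show ?thesis .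
qed

lemma sum_outer_ev: "finite S \<Longrightarrow> (\<Sum>j\<in>S. of_real 1 * outer (ev j) x y) = (if x \<in> S \<and> x = y then 1 else 0)"
  by (auto simp: outer_def ev_def ifmult sum.delta)


lemma offdiag:
  assumes dens: "density_operator n (Suc (Suc k)) \<rho>"
    and H: "\<forall>\<sigma>. self_adjoint n \<sigma> \<longrightarrow> sigma_SMC n (Suc (Suc k)) \<sigma> \<rho>"
    and ij: "i < n" "j < n" "i \<noteq> j" and r: "r \<in> tidx n k"
  shows "Re (\<rho> (i#j#r) (i#j#r)) = 0"
proof -
  have norm: "(\<Sum>l<n. cnj (ev i l) * ev i l) = of_real 1"
  proof -
    have "(\<Sum>l<n. cnj (ev i l) * ev i l) = (\<Sum>l<n. if l = i then 1 else 0)"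
      by (rule sum.cong) (auto simp: ev_def)
    then show ?thesis using ij by simp
  qed
  have dec: "dl x y - outer (ev i) x y / of_real 1 = (\<Sum>l\<in>{..<n}-{i}. of_real ((\<lambda>_. 1) l) * outer (ev l) x y)"
    if "x < n" "y < n" for x y
    using that by (subst sum_outer_ev) (auto simp: dl_def outer_def ev_def)
  have "Re (qr n \<rho> r (\<lambda>x y. ev i x * ev j y)) = 0"
    using key[OF dens H _ norm dec, where jz = j and r = r] ij r by auto
  then show ?thesis using qr_ev ij by simp
qed

lemma diag_omega:
  assumes dens: "density_operator n (Suc (Suc k)) \<rho>"
    and H: "\<forall>\<sigma>. self_adjoint n \<sigma> \<longrightarrow> sigma_SMC n (Suc (Suc k)) \<sigma> \<rho>"
    and ij: "i < n" "j < n" "i \<noteq> j" and r: "r \<in> tidx n k"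
    and om: "cnj \<omega> * \<omega> = 1"
  shows "Re (qr n \<rho> r (\<lambda>x y. (ev i x + \<omega> * ev j x) * (ev i y - \<omega> * ev j y))) = 0
       \<and> Re (qr n \<rho> r (\<lambda>x y. (ev i x - \<omega> * ev j x) * (ev i y + \<omega> * ev j y))) = 0"
proof -
  define u where "u = (\<lambda>x. ev i x + \<omega> * ev j x)"
  define u' where "u' = (\<lambda>x. ev i x - \<omega> * ev j x)"
  have om2: "\<omega> * cnj \<omega> = 1" using om by (simp add: mult.commute)
  have norm: "(\<Sum>l<n. cnj (u l) * u l) = of_real 2"
  proof -
    have "(\<Sum>l<n. cnj (u l) * u l) = (\<Sum>l<n. (if l = i then 1 else 0) + (if l = j then 1 else 0))"
      by (rule sum.cong) (use ij om in \<open>auto simp: u_def ev_def\<close>)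
    also have "\<dots> = 2" using ij by (simp add: sum.distrib)
    finally show ?thesis by simp
  qed
  define g where "g = (\<lambda>l. if l = i then u' else ev l)"
  define w where "w = (\<lambda>l. if l = i then (1/2::real) else 1)"
  have ou: "outer u x y + outer u' x y = 2 * (ev i x * ev i y + ev j x * ev j y)" for x y
  proof -
    have c: "cnj (ev a z) = ev a z" for a z by (simp add: ev_def)
    have "outer u x y + outer u' x y = 2 * (ev i x * ev i y) + 2 * (\<omega> * cnj \<omega>) * (ev j x * ev j y)"
      unfolding outer_def u_def u'_def by (simp add: c algebra_simps)
    then show ?thesis using om2 by (simp add: algebra_simps)
  qed
  have dec: "dl x y - outer u x y / of_real 2 = (\<Sum>l\<in>{..<n}-{j}. of_real (w l) * outer (g l) x y)"
    if "x < n" "y < n" for x y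
  proof -
    have iK: "i \<in> {..<n}-{j}" using ij by auto
    have "(\<Sum>l\<in>{..<n}-{j}. of_real (w l) * outer (g l) x y)
        = of_real (1/2) * outer u' x y + (\<Sum>l\<in>{..<n}-{j}-{i}. of_real 1 * outer (ev l) x y)"
      by (subst sum.remove[OF _ iK]) (auto simp: w_def g_def intro!: sum.cong)
    also have "\<dots> = outer u' x y / 2 + (if x \<in> {..<n}-{j}-{i} \<and> x = y then 1 else 0)"
      by (subst sum_outer_ev) auto
    finally have R: "(\<Sum>l\<in>{..<n}-{j}. of_real (w l) * outer (g l) x y) = outer u' x y / 2 + (if x \<in> {..<n}-{j}-{i} \<and> x = y then 1 else 0)" .
    have "outer u' x y = 2 * (ev i x * ev i y + ev j x * ev j y) - outer u x y" using ou[of x y] by algebra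
    then show ?thesis unfolding R using that ij
      by (auto simp: dl_def ev_def field_simps) (simp_all add: distrib_left[symmetric])
  qed
  have iK: "i \<in> {..<n}-{j}" and wi: "w i > 0" using ij by (auto simp: w_def)
  have wpos: "\<And>l. l \<in> {..<n}-{j} \<Longrightarrow> w l \<ge> 0" by (simp add: w_def)
  have N2: "(2::real) > 0" by simp
  have fin: "finite ({..<n}-{j})" by simp
  have kk: "Re (qr n \<rho> r (\<lambda>x y. u x * g i y)) = 0 \<and> Re (qr n \<rho> r (\<lambda>x y. g i x * u y)) = 0"
    by (rule key[OF dens H N2 norm dec fin wpos iK wi r])
  have e1: "(\<lambda>x y. u x * g i y) = (\<lambda>x y. (ev i x + \<omega> * ev j x) * (ev i y - \<omega> * ev j y))"
    by (simp add: g_def u_def u'_def)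
  have e2: "(\<lambda>x y. g i x * u y) = (\<lambda>x y. (ev i x - \<omega> * ev j x) * (ev i y + \<omega> * ev j y))"
    by (simp add: g_def u_def u'_def)
  show ?thesis using kk unfolding e1 e2 .
qed


lemma diag:
  assumes dens: "density_operator n (Suc (Suc k)) \<rho>"
    and H: "\<forall>\<sigma>. self_adjoint n \<sigma> \<longrightarrow> sigma_SMC n (Suc (Suc k)) \<sigma> \<rho>"
    and ij: "i < n" "j < n" "i \<noteq> j" and r: "r \<in> tidx n k"
  shows "Re (\<rho> (i#i#r) (i#i#r)) = 0"
proof -
  define Eii where "Eii = (\<lambda>x y. ev i x * ev i y)"
  define Ejj where "Ejj = (\<lambda>x y. ev j x * ev j y)"
  define f1 where "f1 = (\<lambda>x y. Eii x y - Ejj x y)"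
  define f2 where "f2 = (\<lambda>x y. Eii x y + Ejj x y)"
  define g1 where "g1 = (\<lambda>x y. ev j x * ev i y - ev i x * ev j y)"
  define g2 where "g2 = (\<lambda>x y. \<i> * g1 x y)"
  have o1: "cnj (1::complex) * 1 = 1" by simp
  have o2: "cnj \<i> * \<i> = 1" by simp
  note d1 = diag_omega[OF dens H ij r o1]
  note d2 = diag_omega[OF dens H ij r o2]
  have q1: "(\<lambda>x y. (ev i x + 1 * ev j x) * (ev i y - 1 * ev j y)) = (\<lambda>x y. f1 x y + g1 x y)"
    by (simp add: f1_def g1_def Eii_def Ejj_def algebra_simps)
  have q2: "(\<lambda>x y. (ev i x - 1 * ev j x) * (ev i y + 1 * ev j y)) = (\<lambda>x y. f1 x y - g1 x y)"
    by (simp add: f1_def g1_def Eii_def Ejj_def algebra_simps)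
  have q3: "(\<lambda>x y. (ev i x + \<i> * ev j x) * (ev i y - \<i> * ev j y)) = (\<lambda>x y. f2 x y + g2 x y)"
    by (simp add: f2_def g2_def g1_def Eii_def Ejj_def algebra_simps)
  have q4: "(\<lambda>x y. (ev i x - \<i> * ev j x) * (ev i y + \<i> * ev j y)) = (\<lambda>x y. f2 x y - g2 x y)"
    by (simp add: f2_def g2_def g1_def Eii_def Ejj_def algebra_simps)
  have nn: "\<And>f. Re (qr n \<rho> r f) \<ge> 0" using qr_nonneg[OF dens r] by blast
  have p1: "Re (qr n \<rho> r f1) = 0"
  proof -
    have "Re (qr n \<rho> r (\<lambda>x y. f1 x y + g1 x y) + qr n \<rho> r (\<lambda>x y. f1 x y - g1 x y)) = 0"
      using d1 unfolding q1 q2 by simp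
    then have "2 * Re (qr n \<rho> r f1) + 2 * Re (qr n \<rho> r g1) = 0" unfolding qr_par by simp
    then show ?thesis using nn[of f1] nn[of g1] by linarith
  qed
  have p2: "Re (qr n \<rho> r f2) = 0"
  proof -
    have "Re (qr n \<rho> r (\<lambda>x y. f2 x y + g2 x y) + qr n \<rho> r (\<lambda>x y. f2 x y - g2 x y)) = 0"
      using d2 unfolding q3 q4 by simp
    then have "2 * Re (qr n \<rho> r f2) + 2 * Re (qr n \<rho> r g2) = 0" unfolding qr_par by simp
    then show ?thesis using nn[of f2] nn[of g2] by linarith
  qed
  have "Re (qr n \<rho> r f2 + qr n \<rho> r f1) = 0" using p1 p2 by simp
  also have "qr n \<rho> r f2 + qr n \<rho> r f1 = 2 * qr n \<rho> r Eii + 2 * qr n \<rho> r Ejj"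
    unfolding f1_def f2_def by (rule qr_par)
  finally have "2 * Re (qr n \<rho> r Eii) + 2 * Re (qr n \<rho> r Ejj) = 0" by simp
  then have "Re (qr n \<rho> r Eii) = 0" using nn[of Eii] nn[of Ejj] by linarith
  then show ?thesis unfolding Eii_def using qr_ev ij by simp
qed

theorem proposition1:
  fixes n m :: nat
  assumes "n \<ge> 2" and "m \<ge> 2"
  shows "\<not> (\<exists>\<rho>. density_operator n m \<rho> \<and>
              (\<forall>\<sigma>. self_adjoint n \<sigma> \<longrightarrow> sigma_SMC n m \<sigma> \<rho>))"
proof
  assume "\<exists>\<rho>. density_operator n m \<rho> \<and> (\<forall>\<sigma>. self_adjoint n \<sigma> \<longrightarrow> sigma_SMC n m \<sigma> \<rho>)"
  then obtain \<rho> where dens0: "density_operator n m \<rho>"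
    and H0: "\<forall>\<sigma>. self_adjoint n \<sigma> \<longrightarrow> sigma_SMC n m \<sigma> \<rho>" by blast
  define k where "k = m - 2"
  have mk: "m = Suc (Suc k)" using assms(2) unfolding k_def by simp
  have dens: "density_operator n (Suc (Suc k)) \<rho>" using dens0 mk by simp
  have H: "\<forall>\<sigma>. self_adjoint n \<sigma> \<longrightarrow> sigma_SMC n (Suc (Suc k)) \<sigma> \<rho>" using H0 mk by simp
  have each: "Re (\<rho> (x#y#r) (x#y#r)) = 0" if "x < n" "y < n" "r \<in> tidx n k" for x y r
  proof (cases "x = y")
    case True
    define j where "j = (if x = 0 then 1 else (0::nat))"
    have "j < n" "x \<noteq> j" using assms(1) by (auto simp: j_def)
    then show ?thesis using diag[OF dens H \<open>x < n\<close> \<open>j < n\<close> _ \<open>r \<in> tidx n k\<close>] True by simp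
  next
    case False
    then show ?thesis using offdiag[OF dens H that(1,2) False that(3)] by simp
  qed
  have "ttrace n m \<rho> = 1" using dens0 unfolding density_operator_def by blast
  then have "1 = Re (ttrace n (Suc (Suc k)) \<rho>)" using mk by simp
  also have "\<dots> = (\<Sum>x<n. \<Sum>y<n. \<Sum>r\<in>tidx n k. Re (\<rho> (x#y#r) (x#y#r)))"
    unfolding ttrace_def sum_tidx_SS by (simp add: Re_sum)
  also have "\<dots> = 0" using each by simp
  finally show False by simp
qed

end
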